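(* Let $\sigma_j$, $\lambda_j$, $\Lambda_j$ be, respectively, the eigenvalues on $(0,1)$ of the buckling problem $u''''=-\sigma u''$ with $u(0)=u'(0)=u(1)=u'(1)=0$, of the Dirichlet Laplacian $-u''=\lambda u$ with $u(0)=u(1)=0$, and of the Dirichlet Bilaplacian $u''''=\Lambda u$ with $u(0)=u'(0)=u(1)=u'(1)=0$, each listed in increasing order. Then for all $j\in\mathbb N$, $$\Lambda_j>\lambda_j\sigma_j.$$
   Context: All three problems have simple eigenvalues forming increasing sequences $\to+\infty$; the problems are understood in the weak sense in $H^1_0(0,1)$ (Laplacian) and $H^2_0(0,1)$ (the two fourth-order problems). *)

theory Defs
  imports Complex_Main
begin

text \<open>ds 0 = u and ds (Suc k) is the derivative of ds k, for k < n, everywhere on the real line.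
  (Eigenfunctions of these constant-coefficient problems on (0,1) are restrictions of entire
  functions, so classical C^n solutions coincide with the weak ones.)\<close>
definition has_derivs :: "nat \<Rightarrow> (nat \<Rightarrow> real \<Rightarrow> real) \<Rightarrow> bool" where
  "has_derivs n ds \<longleftrightarrow>
     (\<forall>k<n. \<forall>x. (ds k has_real_derivative ds (Suc k) x) (at x))"

definition dirichlet_laplacian_eig :: "real \<Rightarrow> bool" where
  "dirichlet_laplacian_eig lam \<longleftrightarrow>
     (\<exists>ds. has_derivs 2 ds \<and>
        (\<forall>x\<in>{0<..<1}. - ds 2 x = lam * ds 0 x) \<and>
        ds 0 0 = 0 \<and> ds 0 1 = 0 \<and>
        (\<exists>x\<in>{0<..<1}. ds 0 x \<noteq> 0))"

definition buckling_eig :: "real \<Rightarrow> bool" where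
  "buckling_eig \<sigma> \<longleftrightarrow>
     (\<exists>ds. has_derivs 4 ds \<and>
        (\<forall>x\<in>{0<..<1}. ds 4 x = - \<sigma> * ds 2 x) \<and>
        ds 0 0 = 0 \<and> ds 1 0 = 0 \<and> ds 0 1 = 0 \<and> ds 1 1 = 0 \<and>
        (\<exists>x\<in>{0<..<1}. ds 0 x \<noteq> 0))"

definition dirichlet_bilaplacian_eig :: "real \<Rightarrow> bool" where
  "dirichlet_bilaplacian_eig \<Lambda> \<longleftrightarrow>
     (\<exists>ds. has_derivs 4 ds \<and>
        (\<forall>x\<in>{0<..<1}. ds 4 x = \<Lambda> * ds 0 x) \<and>
        ds 0 0 = 0 \<and> ds 1 0 = 0 \<and> ds 0 1 = 0 \<and> ds 1 1 = 0 \<and>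
        (\<exists>x\<in>{0<..<1}. ds 0 x \<noteq> 0))"

definition jth_eig :: "(real \<Rightarrow> bool) \<Rightarrow> nat \<Rightarrow> real" where
  "jth_eig P j = (THE \<mu>. P \<mu> \<and> finite {\<nu>. P \<nu> \<and> \<nu> < \<mu>} \<and> card {\<nu>. P \<nu> \<and> \<nu> < \<mu>} = j - 1)"

end

theory Submission
  imports Defs "HOL-Analysis.Analysis"
begin


lemma jth_eig_seq:
  fixes f :: "nat \<Rightarrow> real"
  assumes P: "\<And>\<mu>. P \<mu> \<longleftrightarrow> (\<exists>i. \<mu> = f i)" and sm: "strict_mono f"
  shows "jth_eig P (Suc i) = f i"
proof -
  have set: "{\<nu>. P \<nu> \<and> \<nu> < f n} = f ` {..<n}" for n
    using P strict_mono_less[OF sm] by auto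
  have card: "card {\<nu>. P \<nu> \<and> \<nu> < f n} = n" for n
    unfolding set using strict_mono_imp_inj_on[OF sm]
    by (simp add: card_image inj_on_subset)
  have fin: "finite {\<nu>. P \<nu> \<and> \<nu> < f n}" for n unfolding set by simp
  show ?thesis unfolding jth_eig_def
  proof (rule the_equality)
    show "P (f i) \<and> finite {\<nu>. P \<nu> \<and> \<nu> < f i} \<and> card {\<nu>. P \<nu> \<and> \<nu> < f i} = Suc i - 1"
      using P fin card by auto
  next
    fix \<mu> assume h: "P \<mu> \<and> finite {\<nu>. P \<nu> \<and> \<nu> < \<mu>} \<and> card {\<nu>. P \<nu> \<and> \<nu> < \<mu>} = Suc i - 1"
    then obtain n where n: "\<mu> = f n" using P by auto
    then show "\<mu> = f i" using h card[of n] by auto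
  qed
qed

lemma hd_get:
  assumes "has_derivs n ds" "k < n"
  shows "(ds k has_real_derivative ds (Suc k) x) (at x)"
  using assms unfolding has_derivs_def by auto

lemma const01:
  fixes f :: "real \<Rightarrow> real"
  assumes "\<And>x. isCont f x" "\<And>x. x \<in> {0<..<1} \<Longrightarrow> (f has_real_derivative 0) (at x)"
    "x \<in> {0..1}"
  shows "f x = f 0"
  using assms by (intro DERIV_isconst2[of 0 1]) (auto intro!: continuous_at_imp_continuous_on)


lemma mono_zero_deriv:
  fixes F F' :: "real \<Rightarrow> real"
  assumes d: "\<And>x. (F has_real_derivative F' x) (at x)"
    and s: "\<And>x. x \<in> {0<..<1} \<Longrightarrow> F' x \<le> 0" and e: "F 0 = F 1"
    and x: "x \<in> {0<..<1}"
  shows "F' x = 0"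
proof -
  have m0: "F b \<le> F a" if "0 \<le> a" "a \<le> b" "b \<le> 1" for a b
  proof (cases "a = b")
    case False
    then have "a < b" using that by auto
    from MVT2[OF this, of F F'] d obtain z where z: "a < z" "z < b" "F b - F a = (b - a) * F' z"
      by blast
    have "F' z \<le> 0" using s[of z] z that by auto
    then have "(b - a) * F' z \<le> 0" using \<open>a < b\<close> by (simp add: mult_nonneg_nonpos)
    then show ?thesis using z by linarith
  qed simp
  have c: "F y = F 0" if "0 \<le> y" "y \<le> 1" for y
    using m0[of 0 y] m0[of y 1] that e by auto
  show ?thesis
  proof (rule DERIV_local_const[OF d])
    show "0 < min x (1 - x)" using x by auto
    show "\<forall>y. \<bar>x - y\<bar> < min x (1 - x) \<longrightarrow> F x = F y"
    proof (intro allI impI)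
      fix y assume "\<bar>x - y\<bar> < min x (1 - x)"
      then have "0 \<le> y" "y \<le> 1" by (auto simp: abs_if split: if_splits)
      then show "F x = F y" using c[of x] c[of y] x by auto
    qed
  qed
qed

lemma zero_at0:
  fixes f :: "real \<Rightarrow> real"
  assumes "isCont f 0" "\<And>x. x \<in> {0<..<1} \<Longrightarrow> f x = 0"
  shows "f 0 = 0"
proof -
  have "(f \<longlongrightarrow> f 0) (at_right 0)"
    using assms(1) by (simp add: isCont_def filterlim_at_split)
  moreover have "(f \<longlongrightarrow> 0) (at_right 0)"
  proof (rule tendsto_eventually)
    show "\<forall>\<^sub>F x in at_right 0. f x = 0"
      by (rule eventually_mono[OF eventually_at_right_real[of 0 1]]) (auto intro: assms(2))
  qed
  ultimately show ?thesis using tendsto_unique[OF trivial_limit_at_right_real] by blast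
qed

lemma loc_zero_deriv:
  fixes f :: "real \<Rightarrow> real"
  assumes "(f has_real_derivative l) (at x)" "x \<in> {0<..<1}" "\<And>y. y \<in> {0<..<1} \<Longrightarrow> f y = 0"
  shows "l = 0"
proof (rule DERIV_local_const[OF assms(1)])
  show "0 < min x (1 - x)" using assms(2) by auto
  show "\<forall>y. \<bar>x - y\<bar> < min x (1 - x) \<longrightarrow> f x = f y"
    using assms(2,3) by (auto simp: abs_if split: if_splits)
qed

lemma nonzero_from_deriv:
  assumes hd: "has_derivs n ds" and k: "k < n" and nz: "ds k 0 \<noteq> 0"
  shows "\<exists>x\<in>{0<..<1}. ds 0 x \<noteq> 0"
proof (rule ccontr)
  assume "\<not> ?thesis"
  then have z0: "\<And>x. x \<in> {0<..<1} \<Longrightarrow> ds 0 x = 0" by auto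
  have "\<forall>x\<in>{0<..<1}. ds i x = 0" if "i \<le> n" for i
    using that
  proof (induction i)
    case 0 then show ?case using z0 by auto
  next
    case (Suc i)
    show ?case
    proof
      fix x :: real assume x: "x \<in> {0<..<1}"
      show "ds (Suc i) x = 0"
        using loc_zero_deriv[OF hd_get[OF hd, of i x] x] Suc by auto
    qed
  qed
  then have "\<forall>x\<in>{0<..<1}. ds k x = 0" using k by auto
  moreover have "isCont (ds k) 0" using hd_get[OF hd k] DERIV_isCont by blast
  ultimately have "ds k 0 = 0" using zero_at0 by blast
  then show False using nz by simp
qed


lemma osc_unique:
  fixes y0 y1 y2 :: "real \<Rightarrow> real"
  assumes d0: "\<And>x. (y0 has_real_derivative y1 x) (at x)"
    and d1: "\<And>x. (y1 has_real_derivative y2 x) (at x)"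
    and eq: "\<And>x. x \<in> {0<..<1} \<Longrightarrow> y2 x = - c * y0 x" and c: "c \<ge> 0"
    and i0: "y0 0 = 0" and i1: "y1 0 = 0" and x: "x \<in> {0..1}"
  shows "y0 x = 0 \<and> y1 x = 0"
proof -
  define E where "E = (\<lambda>x. (y1 x)^2 + c * (y0 x)^2)"
  have dE: "(E has_real_derivative (2 * y1 x * y2 x + c * (2 * y0 x * y1 x))) (at x)" for x
    unfolding E_def by (auto intro!: derivative_eq_intros d0 d1 simp: algebra_simps)
  have cE: "isCont E x" for x using dE DERIV_isCont by blast
  have dE0: "(E has_real_derivative 0) (at x)" if "x \<in> {0<..<1}" for x
    using dE[of x] eq[OF that] by (simp add: algebra_simps)
  have E0: "E y = 0" if "y \<in> {0..1}" for y
    using const01[OF cE dE0 that] i0 i1 by (simp add: E_def)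
  have y1z: "y1 y = 0" if "y \<in> {0..1}" for y
  proof -
    have "(y1 y)^2 \<le> E y" unfolding E_def using c by simp
    then show ?thesis using E0[OF that] by simp
  qed
  have c0: "isCont y0 x" for x using d0 DERIV_isCont by blast
  have "y0 x = y0 0"
  proof (rule const01[OF c0 _ x])
    fix z :: real assume "z \<in> {0<..<1}"
    then have "y1 z = 0" using y1z by auto
    then show "(y0 has_real_derivative 0) (at z)" using d0[of z] by simp
  qed
  then show ?thesis using i0 y1z[OF x] by simp
qed

lemma hyp_unique:
  fixes y0 y1 y2 :: "real \<Rightarrow> real"
  assumes d0: "\<And>x. (y0 has_real_derivative y1 x) (at x)"
    and d1: "\<And>x. (y1 has_real_derivative y2 x) (at x)"
    and eq: "\<And>x. x \<in> {0<..<1} \<Longrightarrow> y2 x = c^2 * y0 x"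
    and i0: "y0 0 = 0" and i1: "y1 0 = 0" and x: "x \<in> {0..1}"
  shows "y0 x = 0 \<and> y1 x = 0"
proof -
  define P where "P = (\<lambda>x. (y1 x - c * y0 x) * exp (c * x))"
  have dP: "(P has_real_derivative ((y2 x - c * y1 x) * exp (c * x) + (y1 x - c * y0 x) * (exp (c * x) * c))) (at x)" for x
    unfolding P_def by (auto intro!: derivative_eq_intros d0 d1)
  have cP: "isCont P x" for x using dP DERIV_isCont by blast
  have dP0: "(P has_real_derivative 0) (at x)" if "x \<in> {0<..<1}" for x
  proof -
    have "(y2 x - c * y1 x) * exp (c * x) + (y1 x - c * y0 x) * (exp (c * x) * c) = 0"
      using eq[OF that] by (simp add: algebra_simps power2_eq_square)
    then show ?thesis using dP[of x] by simp
  qed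
  have P0: "P y = 0" if "y \<in> {0..1}" for y
    using const01[OF cP dP0 that] i0 i1 by (simp add: P_def)
  have r: "y1 y = c * y0 y" if "y \<in> {0..1}" for y
    using P0[OF that] by (simp add: P_def)
  define Q where "Q = (\<lambda>x. y0 x * exp (- (c * x)))"
  have dQ: "(Q has_real_derivative (y1 x * exp (- (c * x)) + y0 x * (exp (- (c * x)) * (- c)))) (at x)" for x
    unfolding Q_def by (auto intro!: derivative_eq_intros d0)
  have cQ: "isCont Q x" for x using dQ DERIV_isCont by blast
  have dQ0: "(Q has_real_derivative 0) (at x)" if "x \<in> {0<..<1}" for x
  proof -
    have "y1 x * exp (- (c * x)) + y0 x * (exp (- (c * x)) * (- c)) = 0"
      using r[of x] that by (simp add: algebra_simps)
    then show ?thesis using dQ[of x] by simp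
  qed
  have "Q x = 0" using const01[OF cQ dQ0 x] i0 by (simp add: Q_def)
  then have "y0 x = 0" by (simp add: Q_def)
  then show ?thesis using r[OF x] by simp
qed


lemma hd_less2: "has_derivs 2 ds \<longleftrightarrow> (\<forall>x. (ds 0 has_real_derivative ds 1 x) (at x)) \<and> (\<forall>x. (ds 1 has_real_derivative ds 2 x) (at x))"
  unfolding has_derivs_def by (simp add: numeral_2_eq_2 All_less_Suc2 del: All_less_Suc)

lemma hd_less4: "has_derivs 4 ds \<longleftrightarrow> (\<forall>x. (ds 0 has_real_derivative ds 1 x) (at x)) \<and> (\<forall>x. (ds 1 has_real_derivative ds 2 x) (at x))
   \<and> (\<forall>x. (ds 2 has_real_derivative ds 3 x) (at x)) \<and> (\<forall>x. (ds 3 has_real_derivative ds 4 x) (at x))"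
  unfolding has_derivs_def by (simp add: numeral_eq_Suc All_less_Suc2 del: All_less_Suc)

lemma lap_char:
  "dirichlet_laplacian_eig lam \<longleftrightarrow> (\<exists>m::nat. m \<ge> 1 \<and> lam = (real m * pi)^2)"
proof
  assume "dirichlet_laplacian_eig lam"
  then obtain ds where hd: "has_derivs 2 ds" and eq: "\<And>x. x\<in>{0<..<1} \<Longrightarrow> - ds 2 x = lam * ds 0 x"
    and b0: "ds 0 0 = 0" and b1: "ds 0 1 = 0" and nz: "\<exists>x\<in>{0<..<1}. ds 0 x \<noteq> 0"
    unfolding dirichlet_laplacian_eig_def by blast
  have d0: "\<And>x. (ds 0 has_real_derivative ds 1 x) (at x)" and d1: "\<And>x. (ds 1 has_real_derivative ds 2 x) (at x)"
    using hd unfolding hd_less2 by blast+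
  define u0 u1 u2 where "u0 = ds 0" and "u1 = ds 1" and "u2 = ds 2"
  note d0 = d0[folded u0_def u1_def] and d1 = d1[folded u1_def u2_def]
  note eq = eq[folded u0_def u2_def] and b0 = b0[folded u0_def] and b1 = b1[folded u0_def]
    and nz = nz[folded u0_def]
  show "\<exists>m::nat. m \<ge> 1 \<and> lam = (real m * pi)^2"
  proof (cases "lam \<le> 0")
    case True
    define F where "F = (\<lambda>x. - (u0 x * u1 x))"
    have dF: "(F has_real_derivative - (u1 x * u1 x + u0 x * u2 x)) (at x)" for x
      unfolding F_def by (rule derivative_eq_intros d0 d1 refl | simp)+
    have z: "- (u1 x * u1 x + u0 x * u2 x) = 0" if "x \<in> {0<..<1}" for x
    proof (rule mono_zero_deriv[OF dF _ _ that])
      fix y :: real assume y: "y \<in> {0<..<1}"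
      have "u0 y * u2 y = - lam * (u0 y)^2" proof -
        have e2: "u2 y = - lam * u0 y" using eq[OF y] by linarith
        show ?thesis unfolding e2 by (simp add: power2_eq_square)
      qed
      moreover have "- lam * (u0 y)^2 \<ge> 0" using True by (simp add: mult_nonpos_nonneg)
      moreover have "u1 y * u1 y \<ge> 0" by simp
      ultimately show "- (u1 y * u1 y + u0 y * u2 y) \<le> 0" by linarith
    next
      show "F 0 = F 1" using b0 b1 by (simp add: F_def)
    qed
    have d1z: "u1 x = 0" if "x \<in> {0<..<1}" for x
    proof -
      have "u0 x * u2 x = - lam * (u0 x)^2" proof -
        have e2: "u2 x = - lam * u0 x" using eq[OF that] by linarith
        show ?thesis unfolding e2 by (simp add: power2_eq_square)
      qed
      moreover have "- lam * (u0 x)^2 \<ge> 0" using True by (simp add: mult_nonpos_nonneg)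
      ultimately have "u1 x * u1 x \<le> 0" using z[OF that] by linarith
      then show ?thesis by (simp add: mult_le_0_iff, linarith)
    qed
    have c0: "isCont (u0) x" for x using d0 DERIV_isCont by blast
    have "u0 x = 0" if "x \<in> {0<..<1}" for x
    proof -
      have "u0 x = u0 0"
      proof (rule const01[OF c0])
        fix z :: real assume "z \<in> {0<..<1}"
        then show "(u0 has_real_derivative 0) (at z)" using d0[of z] d1z[of z] by simp
      qed (use that in auto)
      then show ?thesis using b0 by simp
    qed
    then show ?thesis using nz by auto
  next
    case False
    define k where "k = sqrt lam"
    have k: "k > 0" "k^2 = lam" using False by (auto simp: k_def)
    define a where "a = u1 0 / k"
    define w0 where "w0 = (\<lambda>x. u0 x - a * sin (k * x))"
    define w1 where "w1 = (\<lambda>x. u1 x - a * (cos (k * x) * k))"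
    define w2 where "w2 = (\<lambda>x. u2 x - a * (- sin (k * x) * k * k))"
    have dw0: "(w0 has_real_derivative w1 x) (at x)" for x
      unfolding w0_def w1_def by (auto intro!: derivative_eq_intros d0)
    have dw1: "(w1 has_real_derivative w2 x) (at x)" for x
      unfolding w1_def w2_def by (auto intro!: derivative_eq_intros d1)
    have weq: "w2 x = - lam * w0 x" if "x \<in> {0<..<1}" for x
    proof -
      have l: "lam = k*k" using k(2) by (simp add: power2_eq_square)
      have e: "u2 x = - (k*k*u0 x)" using eq[OF that] unfolding l by linarith
      show ?thesis by (simp add: w0_def w2_def e l algebra_simps)
    qed
    have w00: "w0 0 = 0" "w1 0 = 0" using b0 k by (auto simp: w0_def w1_def a_def)
    have wz: "w0 x = 0" if "x \<in> {0..1}" for x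
      using osc_unique[OF dw0 dw1 weq _ w00 that] False by auto
    have "a * sin k = 0" using wz[of 1] b1 by (simp add: w0_def)
    moreover have "a \<noteq> 0"
    proof
      assume "a = 0"
      then have "u0 x = 0" if "x \<in> {0<..<1}" for x using wz[of x] that by (simp add: w0_def)
      then show False using nz by auto
    qed
    ultimately have "sin k = 0" by simp
    then obtain i :: int where i: "k = of_int i * pi" using sin_zero_iff_int2 by blast
    have "i > 0" using k(1) i by (simp add: zero_less_mult_iff)
    then have "k = real (nat i) * pi" using i by simp
    then show ?thesis using k(2) \<open>i > 0\<close> by (intro exI[of _ "nat i"]) auto
  qed
next
  assume "\<exists>m::nat. m \<ge> 1 \<and> lam = (real m * pi)^2"
  then obtain m :: nat where m: "m \<ge> 1" "lam = (real m * pi)^2" by blast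
  define c where "c = real m * pi"
  have c: "c > 0" "sin c = 0" using m by (auto simp: c_def)
  define ds :: "nat \<Rightarrow> real \<Rightarrow> real" where
    "ds = (\<lambda>n x. if n = 0 then sin (c * x) else if n = 1 then cos (c * x) * c else - sin (c * x) * c * c)"
  have hd: "has_derivs 2 ds" unfolding hd_less2 ds_def
    by (auto intro!: derivative_eq_intros)
  have "\<exists>x\<in>{0<..<1}. ds 0 x \<noteq> 0"
    by (rule nonzero_from_deriv[OF hd, of 1]) (use c in \<open>auto simp: ds_def\<close>)
  moreover have "\<forall>x\<in>{0<..<1}. - ds 2 x = lam * ds 0 x"
    using m(2) by (auto simp: ds_def c_def power2_eq_square)
  ultimately show "dirichlet_laplacian_eig lam"
    unfolding dirichlet_laplacian_eig_def using hd c by (intro exI[of _ ds]) (auto simp: ds_def)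
qed


lemma buck_char:
  "buckling_eig sig \<longleftrightarrow> (\<exists>k>0. sig = k^2 \<and> 2 - 2 * cos k - k * sin k = 0)"
proof
  assume "buckling_eig sig"
  then obtain ds where hd: "has_derivs 4 ds" and eq: "\<And>x. x\<in>{0<..<1} \<Longrightarrow> ds 4 x = - sig * ds 2 x"
    and b: "ds 0 0 = 0" "ds 1 0 = 0" "ds 0 1 = 0" "ds 1 1 = 0" and nz: "\<exists>x\<in>{0<..<1}. ds 0 x \<noteq> 0"
    unfolding buckling_eig_def by blast
  have d: "\<And>x. (ds 0 has_real_derivative ds 1 x) (at x)" "\<And>x. (ds 1 has_real_derivative ds 2 x) (at x)"
     "\<And>x. (ds 2 has_real_derivative ds 3 x) (at x)" "\<And>x. (ds 3 has_real_derivative ds 4 x) (at x)"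
    using hd unfolding hd_less4 by blast+
  define u0 u1 u2 u3 u4 where "u0 = ds 0" and "u1 = ds 1" and "u2 = ds 2" and "u3 = ds 3" and "u4 = ds 4"
  note d = d[folded u0_def u1_def u2_def u3_def u4_def]
  note eq = eq[folded u4_def u2_def] and b = b[folded u0_def u1_def] and nz = nz[folded u0_def]
  show "\<exists>k>0. sig = k^2 \<and> 2 - 2 * cos k - k * sin k = 0"
  proof (cases "sig \<le> 0")
    case True
    define G where "G = (\<lambda>x. u0 x * u3 x - u1 x * u2 x + sig * (u0 x * u1 x))"
    have dG: "(G has_real_derivative (u1 x * u3 x + u0 x * u4 x - (u2 x * u2 x + u1 x * u3 x) + sig * (u1 x * u1 x + u0 x * u2 x))) (at x)" for x
      unfolding G_def by (rule derivative_eq_intros d refl | simp)+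
    have key: "u1 x * u3 x + u0 x * u4 x - (u2 x * u2 x + u1 x * u3 x) + sig * (u1 x * u1 x + u0 x * u2 x)
       = sig * (u1 x * u1 x) - u2 x * u2 x" if "x \<in> {0<..<1}" for x
      using eq[OF that] by (simp add: algebra_simps)
    have z: "u1 x * u3 x + u0 x * u4 x - (u2 x * u2 x + u1 x * u3 x) + sig * (u1 x * u1 x + u0 x * u2 x) = 0"
      if "x \<in> {0<..<1}" for x
    proof (rule mono_zero_deriv[OF dG _ _ that])
      fix y :: real assume y: "y \<in> {0<..<1}"
      have "sig * (u1 y * u1 y) \<le> 0" using True by (simp add: mult_nonpos_nonneg)
      then show "u1 y * u3 y + u0 y * u4 y - (u2 y * u2 y + u1 y * u3 y) + sig * (u1 y * u1 y + u0 y * u2 y) \<le> 0"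
        unfolding key[OF y] using not_square_less_zero[of "u2 y"] by linarith
    next
      show "G 0 = G 1" using b by (simp add: G_def)
    qed
    have u2z: "u2 x = - 0 * u0 x" if "x \<in> {0<..<1}" for x
    proof -
      have "sig * (u1 x * u1 x) \<le> 0" using True by (simp add: mult_nonpos_nonneg)
      then have "u2 x * u2 x \<le> 0" using z[OF that] key[OF that] by linarith
      then show ?thesis by (simp add: mult_le_0_iff, linarith)
    qed
    have "u0 x = 0" if "x \<in> {0..1}" for x using osc_unique[OF d(1) d(2) u2z _ b(1) b(2) that] by simp
    then show ?thesis using nz by auto
  next
    case False
    define k where "k = sqrt sig"
    have k: "k > 0" "k^2 = sig" using False by (auto simp: k_def)
    define g where "g = - u2 0 / k^2"
    define h where "h = - u3 0 / k^3"
    define w0 where "w0 = (\<lambda>x. u0 x - (g * (cos (k * x) - 1) + h * (sin (k * x) - k * x)))"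
    define w1 where "w1 = (\<lambda>x. u1 x - (g * (- sin (k * x) * k) + h * (cos (k * x) * k - k)))"
    define w2 where "w2 = (\<lambda>x. u2 x - (g * (- cos (k * x) * k * k) + h * (- sin (k * x) * k * k)))"
    define w3 where "w3 = (\<lambda>x. u3 x - (g * (sin (k * x) * k * k * k) + h * (- cos (k * x) * k * k * k)))"
    define w4 where "w4 = (\<lambda>x. u4 x - (g * (cos (k * x) * k * k * k * k) + h * (sin (k * x) * k * k * k * k)))"
    have dw0: "(w0 has_real_derivative w1 x) (at x)" for x
      unfolding w0_def w1_def by (rule derivative_eq_intros d refl | simp add: algebra_simps)+
    have dw1: "(w1 has_real_derivative w2 x) (at x)" for x
      unfolding w1_def w2_def by (rule derivative_eq_intros d refl | simp add: algebra_simps)+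
    have dw2: "(w2 has_real_derivative w3 x) (at x)" for x
      unfolding w2_def w3_def by (rule derivative_eq_intros d refl | simp add: algebra_simps)+
    have dw3: "(w3 has_real_derivative w4 x) (at x)" for x
      unfolding w3_def w4_def by (rule derivative_eq_intros d refl | simp add: algebra_simps)+
    have l: "sig = k*k" using k(2) by (simp add: power2_eq_square)
    have weq: "w4 x = - sig * w2 x" if "x \<in> {0<..<1}" for x
      using eq[OF that] unfolding w4_def w2_def l by (simp add: algebra_simps)
    have i: "w2 0 = 0" "w3 0 = 0" "w0 0 = 0" "w1 0 = 0" using k b
      by (auto simp: w0_def w1_def w2_def w3_def g_def h_def power2_eq_square power3_eq_cube)
    have w2z: "w2 x = 0 \<and> w3 x = 0" if "x \<in> {0..1}" for x
      using osc_unique[OF dw2 dw3 weq _ i(1,2) that] False by simp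
    have w2z': "w2 x = - 0 * w0 x" if "x \<in> {0<..<1}" for x using w2z[of x] that by simp
    have wz: "w0 x = 0 \<and> w1 x = 0" if "x \<in> {0..1}" for x
      using osc_unique[OF dw0 dw1 w2z' _ i(3,4) that] by simp
    have e1: "g * (cos k - 1) + h * (sin k - k) = 0" using wz[of 1] b(3) by (simp add: w0_def)
    have e2': "g * (- sin k * k) + h * (cos k * k - k) = 0" using wz[of 1] b(4) by (simp add: w1_def)
    have e2: "- g * sin k + h * (cos k - 1) = 0"
    proof -
      have "k * (- g * sin k + h * (cos k - 1)) = 0" using e2' by (simp add: algebra_simps)
      then show ?thesis using k by simp
    qed
    define D where "D = 2 - 2 * cos k - k * sin k"
    have Dsq: "D = (cos k - 1)^2 + sin k * (sin k - k)"
      unfolding D_def using sin_cos_squared_add[of k] by (simp add: algebra_simps power2_eq_square)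
    have gD: "g * D = 0"
    proof -
      have "g * D = (cos k - 1) * (g * (cos k - 1) + h * (sin k - k)) - (sin k - k) * (- g * sin k + h * (cos k - 1))"
        unfolding Dsq power2_eq_square by algebra
      then show ?thesis using e1 e2 by simp
    qed
    have hD: "h * D = 0"
    proof -
      have "h * D = sin k * (g * (cos k - 1) + h * (sin k - k)) + (cos k - 1) * (- g * sin k + h * (cos k - 1))"
        unfolding Dsq power2_eq_square by algebra
      then show ?thesis using e1 e2 by simp
    qed
    have "D = 0"
    proof (rule ccontr)
      assume "D \<noteq> 0"
      then have "g = 0" "h = 0" using gD hD by auto
      then have "u0 x = 0" if "x \<in> {0<..<1}" for x using wz[of x] that by (simp add: w0_def)
      then show False using nz by auto
    qed
    then show ?thesis using k unfolding D_def by auto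
  qed
next
  assume "\<exists>k>0. sig = k^2 \<and> 2 - 2 * cos k - k * sin k = 0"
  then obtain k where k: "k > 0" "sig = k^2" "2 - 2 * cos k - k * sin k = 0" by blast
  define g where "g = sin k - k"
  define h where "h = 1 - cos k"
  define ds :: "nat \<Rightarrow> real \<Rightarrow> real" where
    "ds = (\<lambda>n x. if n = 0 then g * (cos (k * x) - 1) + h * (sin (k * x) - k * x)
       else if n = 1 then g * (- sin (k * x) * k) + h * (cos (k * x) * k - k)
       else if n = 2 then g * (- cos (k * x) * k * k) + h * (- sin (k * x) * k * k)
       else if n = 3 then g * (sin (k * x) * k * k * k) + h * (- cos (k * x) * k * k * k)
       else g * (cos (k * x) * k * k * k * k) + h * (sin (k * x) * k * k * k * k))"
  have hd: "has_derivs 4 ds" unfolding hd_less4 ds_def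
    by (intro conjI allI; (rule derivative_eq_intros refl | simp)+; simp add: algebra_simps)
  have gh: "g \<noteq> 0 \<or> h \<noteq> 0"
  proof (rule ccontr)
    assume "\<not> ?thesis"
    then have "sin k = k" "cos k = 1" by (auto simp: g_def h_def)
    then have "k^2 + 1 = 1" using sin_cos_squared_add[of k] by simp
    then show False using k by simp
  qed
  have "\<exists>x\<in>{0<..<1}. ds 0 x \<noteq> 0"
  proof (cases "g = 0")
    case False
    show ?thesis by (rule nonzero_from_deriv[OF hd, of 2]) (use False k in \<open>auto simp: ds_def\<close>)
  next
    case True
    then have "h \<noteq> 0" using gh by simp
    then show ?thesis by (intro nonzero_from_deriv[OF hd, of 3]) (use k in \<open>auto simp: ds_def\<close>)
  qed
  moreover have "\<forall>x\<in>{0<..<1}. ds 4 x = - sig * ds 2 x"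
    using k(2) by (auto simp: ds_def power2_eq_square algebra_simps)
  moreover have "ds 0 0 = 0" "ds 1 0 = 0" by (auto simp: ds_def)
  moreover have "ds 0 1 = 0"
    using k(3) sin_cos_squared_add[of k] unfolding ds_def g_def h_def by (simp add: algebra_simps power2_eq_square)
  moreover have "ds 1 1 = 0"
  proof -
    have sc: "sin k * sin k + cos k * cos k = 1" using sin_cos_squared_add[of k] by (simp add: power2_eq_square)
    have "ds 1 1 = (sin k - k) * (- sin k * k) + (1 - cos k) * (cos k * k - k)" by (simp add: ds_def g_def h_def)
    also have "\<dots> = - k * (2 - 2 * cos k - k * sin k) + k * (1 - (sin k * sin k + cos k * cos k))"
      by algebra
    also have "\<dots> = - k * (2 - 2 * cos k - k * sin k)" using sc by simp
    finally show ?thesis using k(3) by simp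
  qed
  ultimately show "buckling_eig sig"
    unfolding buckling_eig_def using hd by (intro exI[of _ ds]) auto
qed


lemma bil_char:
  "dirichlet_bilaplacian_eig Lam \<longleftrightarrow> (\<exists>k>0. Lam = k^4 \<and> cos k * cosh k = 1)"
proof
  assume "dirichlet_bilaplacian_eig Lam"
  then obtain ds where hd: "has_derivs 4 ds" and eq: "\<And>x. x\<in>{0<..<1} \<Longrightarrow> ds 4 x = Lam * ds 0 x"
    and b: "ds 0 0 = 0" "ds 1 0 = 0" "ds 0 1 = 0" "ds 1 1 = 0" and nz: "\<exists>x\<in>{0<..<1}. ds 0 x \<noteq> 0"
    unfolding dirichlet_bilaplacian_eig_def by blast
  have d: "\<And>x. (ds 0 has_real_derivative ds 1 x) (at x)" "\<And>x. (ds 1 has_real_derivative ds 2 x) (at x)"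
     "\<And>x. (ds 2 has_real_derivative ds 3 x) (at x)" "\<And>x. (ds 3 has_real_derivative ds 4 x) (at x)"
    using hd unfolding hd_less4 by blast+
  define u0 u1 u2 u3 u4 where "u0 = ds 0" and "u1 = ds 1" and "u2 = ds 2" and "u3 = ds 3" and "u4 = ds 4"
  note d = d[folded u0_def u1_def u2_def u3_def u4_def]
  note eq = eq[folded u4_def u0_def] and b = b[folded u0_def u1_def] and nz = nz[folded u0_def]
  show "\<exists>k>0. Lam = k^4 \<and> cos k * cosh k = 1"
  proof (cases "Lam \<le> 0")
    case True
    define G where "G = (\<lambda>x. u0 x * u3 x - u1 x * u2 x)"
    have dG: "(G has_real_derivative (u1 x * u3 x + u0 x * u4 x - (u2 x * u2 x + u1 x * u3 x))) (at x)" for x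
      unfolding G_def by (rule derivative_eq_intros d refl | simp)+
    have key: "u1 x * u3 x + u0 x * u4 x - (u2 x * u2 x + u1 x * u3 x)
       = Lam * (u0 x * u0 x) - u2 x * u2 x" if "x \<in> {0<..<1}" for x
      using eq[OF that] by (simp add: algebra_simps)
    have z: "u1 x * u3 x + u0 x * u4 x - (u2 x * u2 x + u1 x * u3 x) = 0"
      if "x \<in> {0<..<1}" for x
    proof (rule mono_zero_deriv[OF dG _ _ that])
      fix y :: real assume y: "y \<in> {0<..<1}"
      have "Lam * (u0 y * u0 y) \<le> 0" using True by (simp add: mult_nonpos_nonneg)
      then show "u1 y * u3 y + u0 y * u4 y - (u2 y * u2 y + u1 y * u3 y) \<le> 0"
        unfolding key[OF y] using not_square_less_zero[of "u2 y"] by linarith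
    next
      show "G 0 = G 1" using b by (simp add: G_def)
    qed
    have u2z: "u2 x = - 0 * u0 x" if "x \<in> {0<..<1}" for x
    proof -
      have "Lam * (u0 x * u0 x) \<le> 0" using True by (simp add: mult_nonpos_nonneg)
      then have "u2 x * u2 x \<le> 0" using z[OF that] key[OF that] by linarith
      then show ?thesis by (simp add: mult_le_0_iff, linarith)
    qed
    have "u0 x = 0" if "x \<in> {0..1}" for x using osc_unique[OF d(1) d(2) u2z _ b(1) b(2) that] by simp
    then show ?thesis using nz by auto
  next
    case False
    define k where "k = sqrt (sqrt Lam)"
    have k2: "k^2 = sqrt Lam" using False by (simp add: k_def)
    have "k^4 = (k^2)^2" by simp
    then have "k^4 = Lam" using k2 False by simp
    then have k: "k > 0" "k^4 = Lam" using False by (auto simp: k_def)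
    have l: "Lam = k*k*k*k" using k(2) by (simp add: power4_eq_xxxx)
    define a where "a = u2 0 / (2 * k^2)"
    define bb where "bb = u3 0 / (2 * k^3)"
    define w0 where "w0 = (\<lambda>x. u0 x - (a * (cosh (k * x) - cos (k * x)) + bb * (sinh (k * x) - sin (k * x))))"
    define w1 where "w1 = (\<lambda>x. u1 x - (a * (sinh (k * x) * k + sin (k * x) * k) + bb * (cosh (k * x) * k - cos (k * x) * k)))"
    define w2 where "w2 = (\<lambda>x. u2 x - (a * (cosh (k * x) * k * k + cos (k * x) * k * k) + bb * (sinh (k * x) * k * k + sin (k * x) * k * k)))"
    define w3 where "w3 = (\<lambda>x. u3 x - (a * (sinh (k * x) * k * k * k - sin (k * x) * k * k * k) + bb * (cosh (k * x) * k * k * k + cos (k * x) * k * k * k)))"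
    define w4 where "w4 = (\<lambda>x. u4 x - (a * (cosh (k * x) * k * k * k * k - cos (k * x) * k * k * k * k) + bb * (sinh (k * x) * k * k * k * k - sin (k * x) * k * k * k * k)))"
    have dw0: "(w0 has_real_derivative w1 x) (at x)" for x
      unfolding w0_def w1_def by (rule derivative_eq_intros d refl | simp add: algebra_simps)+
    have dw1: "(w1 has_real_derivative w2 x) (at x)" for x
      unfolding w1_def w2_def by (rule derivative_eq_intros d refl | simp add: algebra_simps)+
    have dw2: "(w2 has_real_derivative w3 x) (at x)" for x
      unfolding w2_def w3_def by (rule derivative_eq_intros d refl | simp add: algebra_simps)+
    have dw3: "(w3 has_real_derivative w4 x) (at x)" for x
      unfolding w3_def w4_def by (rule derivative_eq_intros d refl | simp add: algebra_simps)+
    have weq: "w4 x = k*k*k*k * w0 x" if "x \<in> {0<..<1}" for x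
      using eq[OF that] unfolding w4_def w0_def l by (simp add: algebra_simps)
    have i: "w0 0 = 0" "w1 0 = 0" "w2 0 = 0" "w3 0 = 0" using k b
      by (auto simp: w0_def w1_def w2_def w3_def a_def bb_def power2_eq_square power3_eq_cube)
    define z0 z1 z2 where "z0 = (\<lambda>x. w2 x + k*k * w0 x)" and "z1 = (\<lambda>x. w3 x + k*k * w1 x)"
      and "z2 = (\<lambda>x. w4 x + k*k * w2 x)"
    have dz0: "(z0 has_real_derivative z1 x) (at x)" for x
      unfolding z0_def z1_def by (rule derivative_eq_intros dw0 dw2 refl | simp)+
    have dz1: "(z1 has_real_derivative z2 x) (at x)" for x
      unfolding z1_def z2_def by (rule derivative_eq_intros dw1 dw3 refl | simp)+
    have zeq: "z2 x = k^2 * z0 x" if "x \<in> {0<..<1}" for x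
      unfolding z2_def z0_def using weq[OF that] by (simp add: algebra_simps power2_eq_square)
    have zz: "z0 x = 0 \<and> z1 x = 0" if "x \<in> {0..1}" for x
      by (rule hyp_unique[OF dz0 dz1 zeq _ _ that]) (use i in \<open>auto simp: z0_def z1_def\<close>)
    define y0 y1 y2 where "y0 = (\<lambda>x. w2 x - k*k * w0 x)" and "y1 = (\<lambda>x. w3 x - k*k * w1 x)"
      and "y2 = (\<lambda>x. w4 x - k*k * w2 x)"
    have dy0: "(y0 has_real_derivative y1 x) (at x)" for x
      unfolding y0_def y1_def by (rule derivative_eq_intros dw0 dw2 refl | simp)+
    have dy1: "(y1 has_real_derivative y2 x) (at x)" for x
      unfolding y1_def y2_def by (rule derivative_eq_intros dw1 dw3 refl | simp)+
    have yeq: "y2 x = - (k*k) * y0 x" if "x \<in> {0<..<1}" for x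
      unfolding y2_def y0_def using weq[OF that] by (simp add: algebra_simps)
    have yy: "y0 x = 0 \<and> y1 x = 0" if "x \<in> {0..1}" for x
      by (rule osc_unique[OF dy0 dy1 yeq _ _ _ that]) (use i in \<open>auto simp: y0_def y1_def\<close>)
    have wz: "w0 x = 0 \<and> w1 x = 0" if "x \<in> {0..1}" for x
    proof -
      have "z0 x - y0 x = 0" "z1 x - y1 x = 0" using zz[OF that] yy[OF that] by auto
      then have "2 * (k*k) * w0 x = 0" "2 * (k*k) * w1 x = 0" by (auto simp: z0_def y0_def z1_def y1_def)
      then show ?thesis using k by auto
    qed
    have e1: "a * (cosh k - cos k) + bb * (sinh k - sin k) = 0" using wz[of 1] b(3) by (simp add: w0_def)
    have e2': "a * (sinh k * k + sin k * k) + bb * (cosh k * k - cos k * k) = 0" using wz[of 1] b(4) by (simp add: w1_def)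
    have e2: "a * (sinh k + sin k) + bb * (cosh k - cos k) = 0"
    proof -
      have "k * (a * (sinh k + sin k) + bb * (cosh k - cos k)) = 0" using e2' by (simp add: algebra_simps)
      then show ?thesis using k by simp
    qed
    define D where "D = 2 - 2 * cos k * cosh k"
    have sc: "sin k * sin k + cos k * cos k = 1" using sin_cos_squared_add[of k] by (simp add: power2_eq_square)
    have hc: "cosh k * cosh k - sinh k * sinh k = 1" using hyperbolic_pythagoras[of k] by (simp add: power2_eq_square)
    have Dsq: "D = (cosh k - cos k) * (cosh k - cos k) - (sinh k - sin k) * (sinh k + sin k)"
    proof -
      have "(cosh k - cos k) * (cosh k - cos k) - (sinh k - sin k) * (sinh k + sin k)
          = (cosh k * cosh k - sinh k * sinh k) + (sin k * sin k + cos k * cos k) - 2 * cos k * cosh k"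
        by algebra
      then show ?thesis using sc hc by (simp add: D_def)
    qed
    have aD: "a * D = 0"
    proof -
      have "a * D = (cosh k - cos k) * (a * (cosh k - cos k) + bb * (sinh k - sin k)) - (sinh k - sin k) * (a * (sinh k + sin k) + bb * (cosh k - cos k))"
        unfolding Dsq by algebra
      then show ?thesis using e1 e2 by simp
    qed
    have bD: "bb * D = 0"
    proof -
      have "bb * D = (cosh k - cos k) * (a * (sinh k + sin k) + bb * (cosh k - cos k)) - (sinh k + sin k) * (a * (cosh k - cos k) + bb * (sinh k - sin k))"
        unfolding Dsq by algebra
      then show ?thesis using e1 e2 by simp
    qed
    have "D = 0"
    proof (rule ccontr)
      assume "D \<noteq> 0"
      then have "a = 0" "bb = 0" using aD bD by auto
      then have "u0 x = 0" if "x \<in> {0<..<1}" for x using wz[of x] that by (simp add: w0_def)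
      then show False using nz by auto
    qed
    then show ?thesis using k unfolding D_def by auto
  qed
next
  assume "\<exists>k>0. Lam = k^4 \<and> cos k * cosh k = 1"
  then obtain k where k: "k > 0" "Lam = k^4" "cos k * cosh k = 1" by blast
  define a where "a = sinh k - sin k"
  define bb where "bb = cos k - cosh k"
  define ds :: "nat \<Rightarrow> real \<Rightarrow> real" where
    "ds = (\<lambda>n x. if n = 0 then a * (cosh (k * x) - cos (k * x)) + bb * (sinh (k * x) - sin (k * x))
       else if n = 1 then a * (sinh (k * x) * k + sin (k * x) * k) + bb * (cosh (k * x) * k - cos (k * x) * k)
       else if n = 2 then a * (cosh (k * x) * k * k + cos (k * x) * k * k) + bb * (sinh (k * x) * k * k + sin (k * x) * k * k)
       else if n = 3 then a * (sinh (k * x) * k * k * k - sin (k * x) * k * k * k) + bb * (cosh (k * x) * k * k * k + cos (k * x) * k * k * k)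
       else a * (cosh (k * x) * k * k * k * k - cos (k * x) * k * k * k * k) + bb * (sinh (k * x) * k * k * k * k - sin (k * x) * k * k * k * k))"
  have hd: "has_derivs 4 ds" unfolding hd_less4 ds_def
    by (intro conjI allI; (rule derivative_eq_intros refl | simp add: algebra_simps)+)
  have "cosh k > 1" using cosh_real_ge_1[of k] cosh_real_one_iff[of k] k(1) by linarith
  then have bb: "bb \<noteq> 0" using cos_le_one[of k] unfolding bb_def by linarith
  have "\<exists>x\<in>{0<..<1}. ds 0 x \<noteq> 0"
    by (rule nonzero_from_deriv[OF hd, of 3]) (use bb k in \<open>auto simp: ds_def\<close>)
  moreover have "\<forall>x\<in>{0<..<1}. ds 4 x = Lam * ds 0 x"
    using k(2) by (auto simp: ds_def power4_eq_xxxx algebra_simps)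
  moreover have "ds 0 0 = 0" "ds 1 0 = 0" by (auto simp: ds_def)
  moreover have "ds 0 1 = 0"
    unfolding ds_def a_def bb_def by (simp add: algebra_simps)
  moreover have "ds 1 1 = 0"
  proof -
    have sc: "sin k * sin k + cos k * cos k = 1" using sin_cos_squared_add[of k] by (simp add: power2_eq_square)
    have hc: "cosh k * cosh k - sinh k * sinh k = 1" using hyperbolic_pythagoras[of k] by (simp add: power2_eq_square)
    have "ds 1 1 = (sinh k - sin k) * (sinh k * k + sin k * k) + (cos k - cosh k) * (cosh k * k - cos k * k)"
      by (simp add: ds_def a_def bb_def)
    also have "\<dots> = k * (2 * (cos k * cosh k) - (cosh k * cosh k - sinh k * sinh k) - (sin k * sin k + cos k * cos k))"
      by algebra
    also have "\<dots> = 0" using sc hc k(3) by simp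
    finally show ?thesis .
  qed
  ultimately show "dirichlet_bilaplacian_eig Lam"
    unfolding dirichlet_bilaplacian_eig_def using hd by (intro exI[of _ ds]) auto
qed



lemma cos_npi_add: "cos (real m * pi + r) = (-1)^m * cos r" by (simp add: cos_add)
lemma sin_npi_add: "sin (real m * pi + r) = (-1)^m * sin r" by (simp add: sin_add)

lemma lap_jth: "jth_eig dirichlet_laplacian_eig (Suc n) = (real (Suc n) * pi)^2"
proof (rule jth_eig_seq)
  show "dirichlet_laplacian_eig mu \<longleftrightarrow> (\<exists>i. mu = (real (Suc i) * pi)^2)" for mu
    unfolding lap_char
  proof
    assume "\<exists>m::nat. m \<ge> 1 \<and> mu = (real m * pi)^2"
    then obtain m :: nat where "m \<ge> 1" "mu = (real m * pi)^2" by blast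
    then show "\<exists>i. mu = (real (Suc i) * pi)^2" by (intro exI[of _ "m - 1"]) auto
  qed auto
  show "strict_mono (\<lambda>i. (real (Suc i) * pi)^2)"
    by (rule strict_monoI, rule power_strict_mono) auto
qed

definition qf :: "real \<Rightarrow> real" where "qf t = sin t - t * cos t"

lemma dq: "(qf has_real_derivative t * sin t) (at t)"
  unfolding qf_def by (rule derivative_eq_intros refl | simp)+

lemma cq: "continuous_on A qf"
  using dq by (meson DERIV_isCont continuous_at_imp_continuous_on)

lemma q_pos: assumes "0 < t" "t \<le> pi" shows "qf t > 0"
proof -
  have "qf 0 < qf t"
  proof (rule DERIV_pos_imp_increasing_open[OF assms(1) _ cq])
    fix x :: real assume "0 < x" "x < t"
    then have "x * sin x > 0" using assms sin_gt_zero by auto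
    then show "\<exists>y. (qf has_real_derivative y) (at x) \<and> 0 < y" using dq by blast
  qed
  then show ?thesis by (simp add: qf_def)
qed

lemma q_strict:
  assumes "real m * pi \<le> a" "a < b" "b \<le> real (Suc m) * pi"
  shows "(-1)^m * qf a < (-1)^m * qf b"
proof -
  have H: "\<exists>y. ((\<lambda>t. (-1)^m * qf t) has_real_derivative y) (at x) \<and> 0 < y" if x: "a < x" "x < b" for x
  proof -
    have s1: "sin (x - real m * pi) > 0"
      using x assms by (intro sin_gt_zero) (auto simp: algebra_simps)
    have s2: "sin x = (-1)^m * sin (x - real m * pi)"
      using sin_npi_add[of m "x - real m * pi"] by simp
    have s3: "(-1)^m * (x * sin x) = x * ((-1)^m * (-1)^m) * sin (x - real m * pi)"
      unfolding s2 by (simp only: mult_ac)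
    have "x > 0"
    proof -
      have "real m * pi \<ge> 0" by simp
      then show ?thesis using x assms by linarith
    qed
    then have "(-1)^m * (x * sin x) > 0" unfolding s3 using s1 by simp
    then show ?thesis using DERIV_cmult[OF dq, of "(-1)^m"] by blast
  qed
  have C: "continuous_on {a..b} (\<lambda>t. (-1)^m * qf t)"
    by (intro continuous_intros cq)
  show ?thesis using DERIV_pos_imp_increasing_open[OF assms(2) H C] by simp
qed

lemma q_inj:
  assumes "real m * pi \<le> a" "a \<le> real (Suc m) * pi" "real m * pi \<le> b" "b \<le> real (Suc m) * pi"
    "qf a = 0" "qf b = 0"
  shows "a = b"
  using q_strict[of m a b] q_strict[of m b a] assms by (cases a b rule: linorder_cases) auto

lemma q_ex:
  assumes "m \<ge> 1"
  shows "\<exists>t. real m * pi < t \<and> t < real m * pi + pi/2 \<and> qf t = 0"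
proof -
  define F where "F = (\<lambda>t. (-1)^m * qf t)"
  have "qf (real m * pi) = - (real m * pi) * (-1)^m" by (simp add: qf_def)
  then have F0: "F (real m * pi) = - (real m * pi)" by (simp add: F_def mult.left_commute)
  have "qf (real m * pi + pi/2) = (-1)^m" by (simp add: qf_def sin_npi_add cos_npi_add)
  then have F1: "F (real m * pi + pi/2) = 1" by (simp add: F_def)
  have cF: "continuous_on {real m * pi .. real m * pi + pi/2} F" unfolding F_def by (intro continuous_intros cq)
  have "F (real m * pi) \<le> 0" using F0 by simp
  from IVT'[of F "real m * pi" 0, OF this _ _ cF] F1
  obtain t where t: "real m * pi \<le> t" "t \<le> real m * pi + pi/2" "F t = 0" by auto
  have "t \<noteq> real m * pi" using t(3) F0 assms by auto
  moreover have "t \<noteq> real m * pi + pi/2" using t(3) F1 by auto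
  moreover have "qf t = 0" using t(3) by (simp add: F_def)
  ultimately show ?thesis using t by (intro exI[of _ t]) auto
qed

definition tau :: "nat \<Rightarrow> real" where
  "tau m = (THE t. real m * pi < t \<and> t < real (Suc m) * pi \<and> qf t = 0)"

lemma tau_props:
  assumes "m \<ge> 1"
  shows "real m * pi < tau m" "tau m < real m * pi + pi/2" "qf (tau m) = 0"
    "\<And>t. real m * pi < t \<Longrightarrow> t < real (Suc m) * pi \<Longrightarrow> qf t = 0 \<Longrightarrow> t = tau m"
proof -
  obtain t where t: "real m * pi < t" "t < real m * pi + pi/2" "qf t = 0" using q_ex[OF assms] by blast
  have e: "real (Suc m) * pi = real m * pi + pi" by (simp add: algebra_simps)
  have t': "real m * pi < t \<and> t < real (Suc m) * pi \<and> qf t = 0" using t pi_gt_zero unfolding e by linarith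
  have uniq: "s = t" if h: "real m * pi < s \<and> s < real (Suc m) * pi \<and> qf s = 0" for s
    by (rule q_inj[of m s t]) (use h t' in linarith)+
  have "tau m = t" unfolding tau_def
  proof (rule the_equality)
    show "real m * pi < t \<and> t < real (Suc m) * pi \<and> qf t = 0" by (rule t')
  next
    fix s assume "real m * pi < s \<and> s < real (Suc m) * pi \<and> qf s = 0"
    then show "s = t" by (rule uniq)
  qed
  then show "real m * pi < tau m" "tau m < real m * pi + pi/2" "qf (tau m) = 0" using t by auto
  show "\<And>s. real m * pi < s \<Longrightarrow> s < real (Suc m) * pi \<Longrightarrow> qf s = 0 \<Longrightarrow> s = tau m"
    using uniq \<open>tau m = t\<close> by blast
qed

lemma pi_floor:
  assumes "t \<ge> 0"
  obtains m :: nat where "real m * pi \<le> t" "t < real (Suc m) * pi"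
proof -
  define z where "z = \<lfloor>t / pi\<rfloor>"
  have "z \<ge> 0" using assms by (simp add: z_def)
  then have zr: "real (nat z) = of_int z" by simp
  have "of_int z * pi \<le> t" "t < (of_int z + 1) * pi"
    using floor_divide_lower[of pi t] floor_divide_upper[of pi t] by (auto simp: z_def)
  then show ?thesis using that[of "nat z"] zr by (simp add: algebra_simps)
qed

lemma D_double: "2 - 2 * cos (2*t) - (2*t) * sin (2*t) = 4 * sin t * qf t"
proof -
  have sc: "sin t * sin t + cos t * cos t = 1" using sin_cos_squared_add[of t] by (simp add: power2_eq_square)
  have "2 - 2 * cos (2*t) - (2*t) * sin (2*t) = 2 - 2 * (cos t * cos t - sin t * sin t) - (2*t) * (2 * sin t * cos t)"
    by (simp add: cos_double sin_double power2_eq_square)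
  also have "\<dots> = 4 * sin t * (sin t - t * cos t) + 2 * (1 - (sin t * sin t + cos t * cos t))" by algebra
  finally show ?thesis using sc by (simp add: qf_def)
qed

definition bB :: "nat \<Rightarrow> real" where
  "bB n = (if even n then real (n div 2 + 1) * pi else tau (n div 2 + 1))"

lemma bB_pos: "bB n > 0"
  using tau_props(1)[of "n div 2 + 1"] unfolding bB_def
  by (auto intro: order.strict_trans1[rotated])

lemma bB_mono: "strict_mono bB"
  unfolding strict_mono_Suc_iff
proof
  fix n
  show "bB n < bB (Suc n)"
  proof (cases "even n")
    case True
    then have "Suc n div 2 = n div 2" "odd (Suc n)" by auto
    then show ?thesis using True tau_props(1)[of "n div 2 + 1"] by (simp add: bB_def)
  next
    case False
    then have s: "Suc n div 2 = n div 2 + 1" "even (Suc n)" by (auto elim: oddE)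
    have "tau (n div 2 + 1) < real (n div 2 + 1) * pi + pi/2" using tau_props(2)[of "n div 2 + 1"] by simp
    also have "\<dots> < real (n div 2 + 1 + 1) * pi" by (simp add: algebra_simps)
    finally show ?thesis using s False by (simp add: bB_def)
  qed
qed

lemma buck_seq: "buckling_eig sig \<longleftrightarrow> (\<exists>n. sig = (2 * bB n)^2)"
  unfolding buck_char
proof
  assume "\<exists>k>0. sig = k^2 \<and> 2 - 2 * cos k - k * sin k = 0"
  then obtain k where k: "k > 0" "sig = k^2" "2 - 2 * cos k - k * sin k = 0" by blast
  define t where "t = k / 2"
  have kt: "k = 2 * t" by (simp add: t_def)
  have "4 * sin t * qf t = 0" using k(3) D_double[of t] unfolding kt by simp
  then have st: "sin t = 0 \<or> qf t = 0" by simp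
  have t0: "t > 0" using k by (simp add: t_def)
  show "\<exists>n. sig = (2 * bB n)^2"
  proof (cases "sin t = 0")
    case True
    then obtain i :: int where i: "t = of_int i * pi" using sin_zero_iff_int2 by blast
    have "i > 0" using t0 i by (simp add: zero_less_mult_iff)
    then have "bB (2 * (nat i - 1)) = t" using i by (simp add: bB_def)
    then show ?thesis using k(2) kt by metis
  next
    case False
    then have q: "qf t = 0" using st by simp
    obtain m :: nat where m: "real m * pi \<le> t" "t < real (Suc m) * pi" using pi_floor[of t] t0 by auto
    have "\<not> t \<le> pi" using q_pos[of t] q t0 by auto
    then have "m \<ge> 1" using m by (cases m) auto
    have "t \<noteq> real m * pi" using False by auto
    then have "t = tau m" using tau_props(4)[OF \<open>m \<ge> 1\<close>] m q by auto
    moreover have "bB (2 * (m - 1) + 1) = tau m" using \<open>m \<ge> 1\<close> by (simp add: bB_def)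
    ultimately show ?thesis using k(2) kt by metis
  qed
next
  assume "\<exists>n. sig = (2 * bB n)^2"
  then obtain n where n: "sig = (2 * bB n)^2" by blast
  have "4 * sin (bB n) * qf (bB n) = 0"
  proof (cases "even n")
    case True
    have "sin (real (n div 2 + 1) * pi) = 0" by (rule sin_npi)
    then show ?thesis using True unfolding bB_def by simp
  next
    case False
    then show ?thesis using tau_props(3)[of "n div 2 + 1"] by (simp add: bB_def)
  qed
  then show "\<exists>k>0. sig = k^2 \<and> 2 - 2 * cos k - k * sin k = 0"
    using n bB_pos[of n] D_double[of "bB n"] by (intro exI[of _ "2 * bB n"]) auto
qed

lemma buck_jth: "jth_eig buckling_eig (Suc n) = (2 * bB n)^2"
proof (rule jth_eig_seq[OF buck_seq])
  show "strict_mono (\<lambda>n. (2 * bB n)^2)"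
    using bB_mono bB_pos by (intro strict_monoI power_strict_mono) (auto simp: strict_mono_less intro: less_imp_le)
qed

lemma bB_bound: "2 * bB n \<le> real (n + 2) * pi"
proof (cases "even n")
  case True
  then obtain i where "n = 2 * i" by auto
  then show ?thesis by (simp add: bB_def algebra_simps)
next
  case False
  then obtain i where i: "n = 2 * i + 1" using oddE by blast
  have "tau (i + 1) < real (i + 1) * pi + pi/2" using tau_props(2)[of "i + 1"] by simp
  then show ?thesis using i by (simp add: bB_def algebra_simps)
qed



lemma cos_2pi3: "cos (2 * pi / 3) = - 1/2"
proof -
  have "cos (2 * pi / 3) = cos (pi - pi/3)" by (simp add: field_simps)
  also have "\<dots> = - cos (pi/3)" by (rule cos_pi_minus)
  finally show ?thesis by (simp add: cos_60)
qed

lemma cos_r_bounds: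
  assumes "0 \<le> r" "r \<le> pi"
  shows "r < pi/3 \<Longrightarrow> cos r > 1/2" "pi/3 \<le> r \<Longrightarrow> cos r \<le> 1/2"
    "r \<le> 2*pi/3 \<Longrightarrow> cos r \<ge> -1/2" "2*pi/3 < r \<Longrightarrow> cos r < -1/2"
  using cos_monotone_0_pi[of r "pi/3"] cos_monotone_0_pi_le[of "pi/3" r]
    cos_monotone_0_pi_le[of r "2*pi/3"] cos_monotone_0_pi[of "2*pi/3" r] assms
  by (auto simp: cos_60 cos_2pi3)

lemma sin_mid:
  assumes "pi/3 \<le> r" "r \<le> 2*pi/3"
  shows "sin r > 1/2"
proof -
  have "sin r = cos (\<bar>pi/2 - r\<bar>)" by (simp add: cos_sin_eq[symmetric] cos_abs_real) (simp add: sin_cos_eq)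
  moreover have "cos (\<bar>pi/2 - r\<bar>) > cos (pi/3)"
  proof (rule cos_monotone_0_pi)
    have "pi/2 - r < pi/3" "r - pi/2 < pi/3" using assms pi_gt_zero by linarith+
    then show "\<bar>pi/2 - r\<bar> < pi/3" unfolding abs_less_iff by linarith
  qed (use assms pi_gt_zero in auto)
  ultimately show ?thesis by (simp add: cos_60)
qed


definition gf :: "real \<Rightarrow> real" where "gf x = cos x * cosh x"

lemma dg: "(gf has_real_derivative (- sin x * cosh x + cos x * sinh x)) (at x)"
  unfolding gf_def by (rule derivative_eq_intros refl | simp)+

lemma cg: "continuous_on A gf"
  using dg by (meson DERIV_isCont continuous_at_imp_continuous_on)

lemma cosh_big: fixes x :: real assumes "x \<ge> 3" shows "cosh x > 2"
proof -
  have "exp x \<ge> 1 + x + x^2/2" using exp_lower_Taylor_quadratic[of x] assms by simp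
  moreover have "x^2 \<ge> 9" using power_mono[of 3 x 2] assms by simp
  ultimately have "exp x > 4" using assms by simp
  moreover have "exp (-x) > 0" by simp
  ultimately have "exp x + exp (-x) > 4" by linarith
  then show ?thesis by (simp add: cosh_field_def)
qed

lemma g_small:
  assumes "0 < m" "m \<le> pi"
  shows "gf m < 1"
proof -
  define h :: "real \<Rightarrow> real" where "h = (\<lambda>x. cos x * sinh x - sin x * cosh x)"
  have dh: "(h has_real_derivative (- 2 * sin x * sinh x)) (at x)" for x
    unfolding h_def by (rule derivative_eq_intros refl | simp add: algebra_simps)+
  have hneg: "h x < 0" if "0 < x" "x \<le> pi" for x
  proof -
    have "h 0 > h x"
    proof (rule DERIV_neg_imp_decreasing_open[OF that(1)])
      fix y :: real assume "0 < y" "y < x"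
      then have "sin y > 0" "sinh y > 0" using that sin_gt_zero by auto
      then have "- 2 * sin y * sinh y < 0" by simp
      then show "\<exists>z. (h has_real_derivative z) (at y) \<and> z < 0" using dh by blast
    next
      show "continuous_on {0..x} h" using dh by (meson DERIV_isCont continuous_at_imp_continuous_on)
    qed
    then show ?thesis by (simp add: h_def)
  qed
  have "gf 0 > gf m"
  proof (rule DERIV_neg_imp_decreasing_open[OF assms(1) _ cg])
    fix y :: real assume "0 < y" "y < m"
    then have "h y < 0" using hneg assms by auto
    then show "\<exists>z. (gf has_real_derivative z) (at y) \<and> z < 0" using dg[of y] unfolding h_def
      by (intro exI[of _ "- sin y * cosh y + cos y * sinh y"]) (auto simp: algebra_simps)
  qed
  then show ?thesis by (simp add: gf_def)
qed

lemma g_dec: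
  assumes "real m * pi + pi/3 \<le> a" "a < b" "b \<le> real m * pi + 2*pi/3"
  shows "(-1)^m * gf b < (-1)^m * gf a"
proof -
  have H: "\<exists>z. ((\<lambda>t. (-1)^m * gf t) has_real_derivative z) (at x) \<and> z < 0" if x: "a < x" "x < b" for x
  proof -
    define r where "r = x - real m * pi"
    have r: "pi/3 < r" "r < 2*pi/3" using x assms by (auto simp: r_def)
    have xr: "x = real m * pi + r" by (simp add: r_def)
    have sx: "sin x = (-1)^m * sin r" and cx: "cos x = (-1)^m * cos r" unfolding xr
      by (rule sin_npi_add, rule cos_npi_add)
    have e: "(-1)^m * (- sin x * cosh x + cos x * sinh x) = - sin r * cosh x + cos r * sinh x"
    proof (cases "even m")
      case True
      then have "(-1)^m = (1::real)" by simp
      then show ?thesis unfolding sx cx by simp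
    next
      case False
      then have "(-1)^m = (-1::real)" by simp
      then show ?thesis unfolding sx cx by simp
    qed
    have "real m * pi \<ge> 0" by simp
    then have "x > 0" using x assms pi_gt_zero by linarith
    then have sh: "sinh x \<ge> 0" by simp
    have "cos r \<le> 1/2" "cos r \<ge> -1/2" using cos_r_bounds(2)[of r] cos_r_bounds(3)[of r] r pi_gt_zero
      by linarith+
    then have cr: "\<bar>cos r\<bar> \<le> 1/2" unfolding abs_le_iff by linarith
    have sr: "sin r > 1/2" using sin_mid[of r] r by auto
    have "cos r * sinh x \<le> \<bar>cos r\<bar> * sinh x" using sh by (intro mult_right_mono) auto
    also have "\<dots> \<le> 1/2 * sinh x" using sh cr by (intro mult_right_mono) auto
    also have "\<dots> < 1/2 * cosh x" using sinh_less_cosh_real[of x] by simp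
    also have "\<dots> < sin r * cosh x" using sr by (intro mult_strict_right_mono) auto
    finally have "- sin r * cosh x + cos r * sinh x < 0" by simp
    then have "(-1)^m * (- sin x * cosh x + cos x * sinh x) < 0" unfolding e .
    then show ?thesis using DERIV_cmult[OF dg, of "(-1)^m" x] by blast
  qed
  have C: "continuous_on {a..b} (\<lambda>t. (-1)^m * gf t)" by (intro continuous_intros cg)
  show ?thesis using DERIV_neg_imp_decreasing_open[OF assms(2) H C] by simp
qed


lemma g_root_ex:
  assumes "m \<ge> 1"
  shows "\<exists>x. real m * pi + pi/3 \<le> x \<and> x \<le> real m * pi + 2*pi/3 \<and> gf x = 1 \<and>
     (even m \<longrightarrow> x \<le> real m * pi + pi/2) \<and> (odd m \<longrightarrow> real m * pi + pi/2 \<le> x)"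
proof -
  have mpi: "real m * pi \<ge> pi" using assms by simp
  have big: "cosh y > 2" if "y \<ge> real m * pi" for y using cosh_big[of y] pi_gt3 mpi that by linarith
  have gmid: "gf (real m * pi + pi/2) = 0" by (simp add: gf_def cos_npi_add)
  show ?thesis
  proof (cases "even m")
    case True
    have "gf (real m * pi + pi/3) = cosh (real m * pi + pi/3) / 2" using True by (simp add: gf_def cos_npi_add cos_60)
    then have g1: "gf (real m * pi + pi/3) \<ge> 1" using big[of "real m * pi + pi/3"] by simp
    have "\<exists>x\<ge>real m * pi + pi/3. x \<le> real m * pi + pi/2 \<and> gf x = 1"
      by (rule IVT2') (use gmid g1 in \<open>auto intro: cg\<close>)
    then obtain x where "real m * pi + pi/3 \<le> x" "x \<le> real m * pi + pi/2" "gf x = 1" by blast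
    then show ?thesis using True by (intro exI[of _ x]) auto
  next
    case False
    have "gf (real m * pi + 2*pi/3) = cosh (real m * pi + 2*pi/3) / 2" using False
      by (simp add: gf_def cos_npi_add cos_2pi3)
    then have g1: "gf (real m * pi + 2*pi/3) \<ge> 1" using big[of "real m * pi + 2*pi/3"] by simp
    have "\<exists>x\<ge>real m * pi + pi/2. x \<le> real m * pi + 2*pi/3 \<and> gf x = 1"
      by (rule IVT') (use gmid g1 in \<open>auto intro: cg\<close>)
    then obtain x where "real m * pi + pi/2 \<le> x" "x \<le> real m * pi + 2*pi/3" "gf x = 1" by blast
    then show ?thesis using False by (intro exI[of _ x]) auto
  qed
qed

lemma g_uniq:
  assumes "real m * pi + pi/3 \<le> a" "a \<le> real m * pi + 2*pi/3" "gf a = 1"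
    "real m * pi + pi/3 \<le> b" "b \<le> real m * pi + 2*pi/3" "gf b = 1"
  shows "a = b"
  using g_dec[of m a b] g_dec[of m b a] assms by (cases a b rule: linorder_cases) auto

definition mu :: "nat \<Rightarrow> real" where
  "mu m = (THE x. real m * pi + pi/3 \<le> x \<and> x \<le> real m * pi + 2*pi/3 \<and> gf x = 1)"

lemma mu_props:
  assumes "m \<ge> 1"
  shows "real m * pi + pi/3 \<le> mu m" "mu m \<le> real m * pi + 2*pi/3" "gf (mu m) = 1"
    "even m \<Longrightarrow> mu m \<le> real m * pi + pi/2" "odd m \<Longrightarrow> real m * pi + pi/2 \<le> mu m"
    "\<And>x. real m * pi + pi/3 \<le> x \<Longrightarrow> x \<le> real m * pi + 2*pi/3 \<Longrightarrow> gf x = 1 \<Longrightarrow> x = mu m"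
proof -
  obtain x where x: "real m * pi + pi/3 \<le> x" "x \<le> real m * pi + 2*pi/3" "gf x = 1"
     "even m \<longrightarrow> x \<le> real m * pi + pi/2" "odd m \<longrightarrow> real m * pi + pi/2 \<le> x"
    using g_root_ex[OF assms] by blast
  have uniq: "y = x" if h: "real m * pi + pi/3 \<le> y \<and> y \<le> real m * pi + 2*pi/3 \<and> gf y = 1" for y
    using g_uniq[of m y x] h x by blast
  have "mu m = x" unfolding mu_def
  proof (rule the_equality)
    show "real m * pi + pi/3 \<le> x \<and> x \<le> real m * pi + 2*pi/3 \<and> gf x = 1" using x by blast
  next
    fix y assume "real m * pi + pi/3 \<le> y \<and> y \<le> real m * pi + 2*pi/3 \<and> gf y = 1"
    then show "y = x" by (rule uniq)
  qed
  then show "real m * pi + pi/3 \<le> mu m" "mu m \<le> real m * pi + 2*pi/3" "gf (mu m) = 1"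
    "even m \<Longrightarrow> mu m \<le> real m * pi + pi/2" "odd m \<Longrightarrow> real m * pi + pi/2 \<le> mu m" using x by auto
  show "\<And>y. real m * pi + pi/3 \<le> y \<Longrightarrow> y \<le> real m * pi + 2*pi/3 \<Longrightarrow> gf y = 1 \<Longrightarrow> y = mu m"
    using uniq \<open>mu m = x\<close> by blast
qed

lemma g_loc:
  assumes "x > 0" "gf x = 1"
  shows "\<exists>m\<ge>1. x = mu m"
proof -
  have xp: "x > pi" using g_small[of x] assms by force
  obtain m :: nat where m: "real m * pi \<le> x" "x < real (Suc m) * pi" using pi_floor[of x] assms by auto
  have "m \<ge> 1" using m xp by (cases m) auto
  define r where "r = x - real m * pi"
  have r: "0 \<le> r" "r < pi" using m by (auto simp: r_def algebra_simps)
  have cx: "cos x = (-1)^m * cos r" using cos_npi_add[of m r] by (simp add: r_def)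
  have "cosh x > 2" using cosh_big[of x] xp pi_gt3 by linarith
  have cx1: "cos x = 1 / cosh x" using assms(2) by (simp add: gf_def field_simps)
  have "cos x > 0" unfolding cx1 by simp
  have "cos x < 1/2" unfolding cx1 using \<open>cosh x > 2\<close> by (simp add: field_simps)
  have acr: "\<bar>cos r\<bar> = cos x" using cx \<open>cos x > 0\<close> by (cases "even m") auto
  have "\<not> r < pi/3"
  proof
    assume "r < pi/3" then have "cos r > 1/2" using cos_r_bounds(1)[of r] r by linarith
    then show False using acr \<open>cos x < 1/2\<close> by linarith
  qed
  moreover have "\<not> 2*pi/3 < r"
  proof
    assume "2*pi/3 < r" then have "cos r < -1/2" using cos_r_bounds(4)[of r] r by linarith
    then show False using acr \<open>cos x < 1/2\<close> by linarith
  qed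
  ultimately have "pi/3 \<le> r" "r \<le> 2*pi/3" by linarith+
  then have "x = mu m" using mu_props(6)[OF \<open>m \<ge> 1\<close>, of x] assms(2) by (simp add: r_def algebra_simps)
  then show ?thesis using \<open>m \<ge> 1\<close> by blast
qed

lemma mu_pos: "m \<ge> 1 \<Longrightarrow> mu m > 0"
proof -
  assume "m \<ge> 1"
  have "real m * pi \<ge> 0" by simp
  then show ?thesis using mu_props(1)[OF \<open>m \<ge> 1\<close>] pi_gt_zero by linarith
qed

lemma mu_mono: "strict_mono (\<lambda>n. mu (Suc n))"
  unfolding strict_mono_Suc_iff
proof
  fix n
  have "mu (Suc n) \<le> real (Suc n) * pi + 2*pi/3" using mu_props(2)[of "Suc n"] by simp
  also have "\<dots> < real (Suc (Suc n)) * pi + pi/3" by (simp add: algebra_simps)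
  also have "\<dots> \<le> mu (Suc (Suc n))" using mu_props(1)[of "Suc (Suc n)"] by simp
  finally show "mu (Suc n) < mu (Suc (Suc n))" .
qed

lemma bil_seq: "dirichlet_bilaplacian_eig L \<longleftrightarrow> (\<exists>n. L = (mu (Suc n))^4)"
  unfolding bil_char
proof
  assume "\<exists>k>0. L = k^4 \<and> cos k * cosh k = 1"
  then obtain k where k: "k > 0" "L = k^4" "gf k = 1" by (auto simp: gf_def)
  obtain m where "m \<ge> 1" "k = mu m" using g_loc[OF k(1,3)] by blast
  then show "\<exists>n. L = (mu (Suc n))^4" using k(2) by (intro exI[of _ "m - 1"]) auto
next
  assume "\<exists>n. L = (mu (Suc n))^4"
  then obtain n where "L = (mu (Suc n))^4" by blast
  then show "\<exists>k>0. L = k^4 \<and> cos k * cosh k = 1"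
    using mu_pos[of "Suc n"] mu_props(3)[of "Suc n"] by (intro exI[of _ "mu (Suc n)"]) (auto simp: gf_def)
qed

lemma bil_jth: "jth_eig dirichlet_bilaplacian_eig (Suc n) = (mu (Suc n))^4"
proof (rule jth_eig_seq[OF bil_seq])
  show "strict_mono (\<lambda>n. (mu (Suc n))^4)"
  proof (rule strict_monoI)
    fix x y :: nat assume "x < y"
    then have "mu (Suc x) < mu (Suc y)" using mu_mono by (simp add: strict_mono_def)
    then show "(mu (Suc x))^4 < (mu (Suc y))^4"
      by (intro power_strict_mono) (use mu_pos[of "Suc x"] in auto)
  qed
qed


lemma sin_half:
  assumes "0 \<le> d" "d \<le> pi/3"
  shows "sin d \<ge> d/2"
proof -
  have "(\<lambda>x. sin x - x/2) 0 \<le> (\<lambda>x. sin x - x/2) d"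
  proof (rule DERIV_nonneg_imp_nondecreasing[OF assms(1)])
    fix x :: real assume x: "0 \<le> x" "x \<le> d"
    have "cos x \<ge> cos (pi/3)" by (rule cos_monotone_0_pi_le) (use x assms in auto)
    then have "cos x - 1/2 \<ge> 0" by (simp add: cos_60)
    moreover have "((\<lambda>x. sin x - x/2) has_real_derivative cos x - 1/2) (at x)"
      by (rule derivative_eq_intros refl | simp)+
    ultimately show "\<exists>y. ((\<lambda>x. sin x - x/2) has_real_derivative y) (at x) \<and> 0 \<le> y" by blast
  qed
  then show ?thesis by simp
qed

lemma lin_aux:
  fixes A B C j p :: real
  shows "j*(197/20) \<le> A \<Longrightarrow> C*(309/10) \<le> B \<Longrightarrow> 2*j \<le> C \<Longrightarrow> 157/50 \<le> p \<Longrightarrow> 2 \<le> j \<Longrightarrow> 16*(2*j+1) < p + A + B/2"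
  by (simp add: field_simps)

lemma numerics:
  fixes j :: real
  assumes "j \<ge> 2"
  shows "pi * (1 + j * pi + (j * pi)^2 / 2) > 16 * (2 * j + 1)"
proof -
  have p: "pi \<ge> 157/50" by (rule order.trans[OF _ pi_approx(1)]) simp
  have p2': "157/50 * (157/50) \<le> pi * pi" using p by (intro mult_mono) auto
  have "(197/20::real) \<le> 157/50 * (157/50)" by simp
  then have p2: "pi^2 \<ge> 197/20" using p2' unfolding power2_eq_square by linarith
  have p3': "157/50 * (157/50) * (157/50) \<le> pi * pi * pi" using p p2' by (intro mult_mono) auto
  have "(309/10::real) \<le> 157/50 * (157/50) * (157/50)" by simp
  then have p3: "pi^3 \<ge> 309/10" using p3' unfolding power3_eq_cube by linarith
  have a1: "j * pi^2 \<ge> j * (197/20)" using p2 assms by (intro mult_left_mono) auto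
  have a2: "(j * j) * pi^3 \<ge> (j * j) * (309/10)" using p3 assms by (intro mult_left_mono) auto
  have a3: "j * j \<ge> 2 * j" using assms by (intro mult_right_mono) auto
  have e: "pi * (1 + j * pi + (j * pi)^2 / 2) = pi + j * pi^2 + (j * j) * pi^3 / 2"
    by (simp add: power2_eq_square power3_eq_cube algebra_simps)
  show ?thesis unfolding e by (rule lin_aux[OF a1 a2 a3 p assms])
qed

lemma mu_lower:
  assumes "j \<ge> 1"
  shows "(mu j)^2 > pi^2 * (real j * (real j + 1))"
proof (cases "even j")
  case False
  have m: "mu j \<ge> real j * pi + pi/2" using mu_props(5)[OF assms False] .
  have "real j * pi + pi/2 \<ge> 0" by (simp add: add_nonneg_nonneg)
  then have "(real j * pi + pi/2)^2 \<le> (mu j)^2" using m by (intro power_mono) auto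
  moreover have "(real j * pi + pi/2)^2 = pi^2 * (real j * (real j + 1)) + pi^2/4"
    by (simp add: power2_eq_square algebra_simps)
  moreover have "pi^2/4 > 0" by simp
  ultimately show ?thesis by linarith
next
  case True
  then have j2: "real j \<ge> 2" using assms by (cases j) (auto, presburger)
  define s where "s = sqrt (real j * (real j + 1))"
  have s2: "s^2 = real j * (real j + 1)" unfolding s_def by simp
  have slo: "real j + 1/3 \<le> s" unfolding s_def
    by (rule real_le_rsqrt) (use j2 in \<open>simp add: power2_eq_square algebra_simps\<close>)
  have shi: "s < real j + 1/2" unfolding s_def
    by (rule real_less_lsqrt) (use j2 in \<open>simp_all add: power2_eq_square algebra_simps\<close>)
  define a where "a = pi * s"
  define e where "e = real j + 1/2 - s"
  have e0: "e > 0" using shi by (simp add: e_def)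
  have e6: "e \<le> 1/6" using slo by (simp add: e_def)
  have ee: "e * (real j + 1/2 + s) = 1/4"
    unfolding e_def using s2 by (simp add: power2_eq_square algebra_simps)
  have ej: "e * (2 * real j + 1) \<ge> 1/4"
  proof -
    have "e * (real j + 1/2 + s) \<le> e * (2 * real j + 1)" using e0 shi by (intro mult_left_mono) auto
    then show ?thesis using ee by linarith
  qed
  have "pi * (real j + 1/3) \<le> pi * s" using slo by (intro mult_left_mono) auto
  then have aK1: "real j * pi + pi/3 \<le> a" unfolding a_def by (simp add: algebra_simps)
  have "pi * s \<le> pi * (real j + 1/2)" using shi by (intro mult_left_mono) auto
  then have "a \<le> real j * pi + pi/2" unfolding a_def by (simp add: algebra_simps)
  then have aK2: "a \<le> real j * pi + 2*pi/3" using pi_gt_zero by linarith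
  have ca: "cos a = sin (pi * e)"
  proof -
    have "a = real j * pi + (pi/2 - pi * e)" unfolding a_def e_def by (simp add: algebra_simps)
    then have "cos a = (-1)^j * cos (pi/2 - pi * e)" using cos_npi_add by simp
    then show ?thesis using True by (simp add: cos_sin_eq)
  qed
  have sd: "sin (pi * e) \<ge> pi * e / 2"
    by (rule sin_half) (use e0 e6 pi_gt_zero in auto)
  have ajp: "a \<ge> real j * pi" using aK1 pi_gt_zero by linarith
  have a0: "a \<ge> 0"
  proof -
    have "real j * pi \<ge> 0" by simp
    then show ?thesis using ajp by linarith
  qed
  have "exp a \<ge> 1 + a + a^2/2" using exp_lower_Taylor_quadratic[OF a0] .
  moreover have "a^2 \<ge> (real j * pi)^2" using ajp by (intro power_mono) auto
  ultimately have "exp a \<ge> 1 + real j * pi + (real j * pi)^2/2" using ajp by linarith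
  moreover have "cosh a \<ge> exp a / 2" by (simp add: cosh_field_def)
  ultimately have ch: "cosh a \<ge> (1 + real j * pi + (real j * pi)^2/2) / 2"
    using divide_right_mono[of "1 + real j * pi + (real j * pi)^2/2" "exp a" 2] by linarith
  define Cb where "Cb = (1 + real j * pi + (real j * pi)^2/2) / 2"
  have Cb: "pi * Cb > 8 * (2 * real j + 1)" using numerics[OF j2] by (simp add: Cb_def)
  have "gf a = sin (pi * e) * cosh a" by (simp add: gf_def ca)
  also have "\<dots> \<ge> (pi * e / 2) * Cb"
  proof (rule mult_mono)
    have "pi * e > 0" using e0 by simp
    then show "0 \<le> sin (pi * e)" using sd by linarith
  qed (use sd ch e0 pi_gt_zero in \<open>auto simp: Cb_def\<close>)
  finally have ga: "gf a \<ge> e * (pi * Cb) / 2" by (simp add: algebra_simps)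
  have "e * (pi * Cb) > e * (8 * (2 * real j + 1))" using Cb e0 by simp
  then have "gf a > 1" using ga ej by linarith
  have "mu j > a"
  proof (rule ccontr)
    assume "\<not> mu j > a"
    then have le: "mu j \<le> a" by simp
    show False
    proof (cases "mu j = a")
      case True then show False using mu_props(3)[OF assms] \<open>gf a > 1\<close> by simp
    next
      case False
      then have "mu j < a" using le by simp
      then have "(-1)^j * gf a < (-1)^j * gf (mu j)" using g_dec[of j "mu j" a] mu_props(1)[OF assms] aK2 by simp
      then show False using \<open>even j\<close> mu_props(3)[OF assms] \<open>gf a > 1\<close> by simp
    qed
  qed
  moreover have "a \<ge> 0"
  proof -
    have "real j * pi \<ge> 0" by simp
    then show ?thesis using ajp by linarith
  qed
  ultimately have "a^2 < (mu j)^2" by (intro power_strict_mono) auto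
  moreover have "a^2 = pi^2 * (real j * (real j + 1))" unfolding a_def using s2 by (simp add: power_mult_distrib)
  ultimately show ?thesis by simp
qed

theorem proposition4p1:
  fixes j :: nat
  assumes "j \<ge> 1"
  shows "jth_eig dirichlet_bilaplacian_eig j
           > jth_eig dirichlet_laplacian_eig j * jth_eig buckling_eig j"
proof -
  obtain n where n: "j = Suc n" using assms by (cases j) auto
  have L: "jth_eig dirichlet_bilaplacian_eig j = (mu j)^4" using bil_jth[of n] n by simp
  have l: "jth_eig dirichlet_laplacian_eig j = (real j * pi)^2" using lap_jth[of n] n by simp
  have sg: "jth_eig buckling_eig j = (2 * bB n)^2" using buck_jth[of n] n by simp
  have "(2 * bB n)^2 \<le> (real (n + 2) * pi)^2"
    using bB_bound[of n] bB_pos[of n] by (intro power_mono) auto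
  then have s1: "(2 * bB n)^2 \<le> ((real j + 1) * pi)^2" using n by (simp add: algebra_simps)
  have "(real j * pi)^2 * (2 * bB n)^2 \<le> (real j * pi)^2 * ((real j + 1) * pi)^2"
    using s1 by (intro mult_left_mono) auto
  also have "\<dots> = (pi^2 * (real j * (real j + 1)))^2" by (simp add: power2_eq_square algebra_simps)
  also have "\<dots> < ((mu j)^2)^2"
    using mu_lower[OF assms] by (intro power_strict_mono) auto
  also have "\<dots> = (mu j)^4" by simp
  finally show ?thesis using L l sg by simp
qed


end
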